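(* Let $\sigma^2>0$, $x_2>0$, $x\ge0$, and $a_1,a_2\in(0,1)$ with $a_1+a_2=1$, and define $\alpha,\beta,J(x)$ as in the context. Then (for every value $\beta>0$, in particular including $\beta\ge1$) $$J(x) = -\frac{x^2+\sigma^2}{x_2^2+\sigma^2} + \log\frac{a_2}{x_2^2+\sigma^2} + \log\bigl(1+\beta^{-1}\bigr) - \frac{\alpha\beta^{-1}}{\alpha+1}\, {}_2F_1\!\left(1, \tfrac{\alpha+1}{\alpha}; \tfrac{2\alpha+1}{\alpha}; -\beta^{-1}\right).$$
   Context: Logarithms are natural. Set $$\alpha = \frac{x_2^2}{x_2^2+\sigma^2}\cdot\frac{x^2+\sigma^2}{\sigma^2}, \qquad \beta = \frac{a_2}{a_1}\cdot\frac{\sigma^2}{x_2^2+\sigma^2},$$ both strictly positive, and $$J(x) = \int_0^\infty \frac{2y}{x^2+\sigma^2}\, e^{-y^2/(x^2+\sigma^2)} \log\!\left( \frac{a_1}{\sigma^2} e^{-y^2/\sigma^2} + \frac{a_2}{x_2^2+\sigma^2} e^{-y^2/(x_2^2+\sigma^2)} \right) dy.$$ ${}_2F_1(\xi_1,\xi_2;\eta_1;z)$ denotes the Gauss hypergeometric function: for $|z|<1$ it equals $\sum_{k\ge0}\frac{(\xi_1)_k(\xi_2)_k}{(\eta_1)_k}\frac{z^k}{k!}$ with $(a)_k=a(a+1)\cdots(a+k-1)$, and it is extended to $z\in\mathbb{C}\setminus(1,\infty)$ by analytic continuation. *)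

theory Defs
  imports "HOL-Complex_Analysis.Complex_Analysis"
begin

text \<open>Gauss hypergeometric series (valid for norm z < 1).\<close>
definition hyp2F1_series :: "complex \<Rightarrow> complex \<Rightarrow> complex \<Rightarrow> complex \<Rightarrow> complex" where
  "hyp2F1_series a b c z =
     (\<Sum>k. pochhammer a k * pochhammer b k / pochhammer c k * z ^ k / of_nat (fact k))"

definition slit_plane :: "complex set" where
  "slit_plane = - {complex_of_real t | t. t \<ge> 1}"

definition hyp2F1 :: "complex \<Rightarrow> complex \<Rightarrow> complex \<Rightarrow> complex \<Rightarrow> complex" where
  "hyp2F1 a b c z =
     (THE w. \<exists>f. f holomorphic_on slit_plane \<and>
                 (\<forall>u. norm u < 1 \<longrightarrow> f u = hyp2F1_series a b c u) \<and> f z = w)"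

definition J_fun :: "real \<Rightarrow> real \<Rightarrow> real \<Rightarrow> real \<Rightarrow> real \<Rightarrow> real" where
  "J_fun \<sigma>2 a1 a2 x2 x =
     (LBINT y:{0..}. 2 * y / (x\<^sup>2 + \<sigma>2) * exp (- y\<^sup>2 / (x\<^sup>2 + \<sigma>2)) *
        ln (a1 / \<sigma>2 * exp (- y\<^sup>2 / \<sigma>2) + a2 / (x2\<^sup>2 + \<sigma>2) * exp (- y\<^sup>2 / (x2\<^sup>2 + \<sigma>2))))"

end

theory Submission
  imports Defs "HOL-Real_Asymp.Real_Asymp"
begin


lemma FTC_0_inf:
  fixes f F :: "real \<Rightarrow> real"
  assumes F: "\<And>x. 0 < x \<Longrightarrow> DERIV F x :> f x"
    and c: "\<And>x. 0 < x \<Longrightarrow> isCont f x"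
    and nn: "\<And>x. 0 < x \<Longrightarrow> 0 \<le> f x"
    and A: "(F \<longlongrightarrow> A) (at_right 0)" and B: "(F \<longlongrightarrow> B) at_top"
  shows "set_integrable lborel {0..} f" "(LBINT x:{0..}. f x) = B - A"
proof -
  have *: "set_integrable lborel (einterval 0 \<infinity>) f" "(LBINT x=0..\<infinity>. f x) = B - A"
    by (rule interval_integral_FTC_nonneg[where F=F];
        use F c nn A B in \<open>auto simp: zero_ereal_def ereal_tendsto_simps\<close>)+
  have d: "set_integrable lborel {0..} f \<longleftrightarrow> set_integrable lborel {0<..} f"
    by (rule set_integrable_discrete_difference[where X="{0}"]) auto
  have e: "(LBINT x:{0..}. f x) = (LBINT x:{0<..}. f x)"
    by (rule set_integral_discrete_difference[where X="{0}"]) auto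
  show "set_integrable lborel {0..} f" using *(1) d by (simp add: zero_ereal_def)
  show "(LBINT x:{0..}. f x) = B - A" using *(2) e
    by (simp add: zero_ereal_def interval_integral_Ioi)
qed



lemma R3:
  fixes s c \<alpha> :: real
  assumes s: "s>0" and c: "c>0" and a: "\<alpha>>0"
  defines "q \<equiv> \<lambda>v. v powr (1/\<alpha>) / (1 + c * v)"
  shows "set_integrable lborel {0..} (\<lambda>y. 2 * y/s * exp(-y\<^sup>2/s) * ln(1 + c * exp(-\<alpha> * y\<^sup>2/s)))"
    "(LBINT y:{0..}. 2 * y/s * exp(-y\<^sup>2/s) * ln(1 + c * exp(-\<alpha> * y\<^sup>2/s))) = ln(1+c) - c * integral {0..1} q"
proof -
  define Q where "Q = (\<lambda>w. integral {0..w} q)"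
  define w where "w = (\<lambda>y::real. exp(-\<alpha> * y\<^sup>2/s))"
  define F where "F = (\<lambda>y. c * Q (w y) - exp(-y\<^sup>2/s) * ln(1 + c * w y))"
  have pc: "continuous_on {0..2} (\<lambda>v::real. v powr (1/\<alpha>))"
    by (rule continuous_on_powr'[OF continuous_on_id continuous_on_const]) (use a in auto)
  have qc: "continuous_on {0..2} q"
    unfolding q_def using c
    by (intro continuous_on_divide pc continuous_intros) (auto, smt (verit) mult_nonneg_nonneg)
  have Qc: "continuous_on {0..2} Q"
    unfolding Q_def by (rule indefinite_integral_continuous_1) (rule integrable_continuous_real[OF qc])
  have QD: "(Q has_real_derivative q v) (at v)" if "0 < v" "v < 2" for v
    using integral_has_real_derivative[OF qc, of v] that
    by (simp add: Q_def at_within_Icc_at)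
  have w01: "0 < w y" "w y < 1" if "y > 0" for y
    using that s a by (auto simp: w_def)
  have wp: "w y powr (1/\<alpha>) = exp(-y\<^sup>2/s)" for y
    using a by (simp add: w_def powr_def)
  have wD: "(w has_real_derivative (- 2 * \<alpha> * y/s * w y)) (at y)" for y
    unfolding w_def using s by (auto intro!: derivative_eq_intros simp: field_simps power2_eq_square)
  have FD: "(F has_real_derivative 2 * y/s * exp(-y\<^sup>2/s) * ln(1 + c * exp(-\<alpha> * y\<^sup>2/s))) (at y)" if "y > 0" for y
  proof -
    have p: "1 + c * w y > 0" using w01[OF that] c by (simp add: add_pos_pos)
    have h1: "((\<lambda>y. c * Q (w y)) has_real_derivative c * (q (w y) * (- 2 * \<alpha> * y/s * w y))) (at y)"
      by (rule DERIV_cmult, rule DERIV_chain2[OF QD wD]) (use w01[OF that] in auto)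
    have h2: "((\<lambda>y. exp(-y\<^sup>2/s)) has_real_derivative (-(2 * y/s)) * exp(-y\<^sup>2/s)) (at y)"
      using s by (auto intro!: derivative_eq_intros simp: field_simps power2_eq_square)
    have i: "((\<lambda>y. 1 + c * w y) has_real_derivative (0 + c * (- 2 * \<alpha> * y/s * w y))) (at y)"
      by (intro DERIV_add DERIV_const DERIV_cmult wD)
    have h3: "((\<lambda>y. ln(1 + c * w y)) has_real_derivative (c * (- 2 * \<alpha> * y/s * w y) / (1 + c * w y))) (at y)"
      using DERIV_chain2[OF DERIV_ln_divide[OF p] i] by (simp add: mult.commute)
    have "(F has_real_derivative c * (q (w y) * (- 2 * \<alpha> * y/s * w y)) -
         ((-(2 * y/s)) * exp(-y\<^sup>2/s) * ln(1 + c * w y) + exp(-y\<^sup>2/s) * (c * (- 2 * \<alpha> * y/s * w y) / (1 + c * w y)))) (at y)"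
      unfolding F_def using DERIV_diff[OF h1 DERIV_mult'[OF h2 h3]] by (simp add: algebra_simps)
    moreover have "c * (q (w y) * (- 2 * \<alpha> * y/s * w y)) -
         ((-(2 * y/s)) * exp(-y\<^sup>2/s) * ln(1 + c * w y) + exp(-y\<^sup>2/s) * (c * (- 2 * \<alpha> * y/s * w y) / (1 + c * w y)))
         = 2 * y/s * exp(-y\<^sup>2/s) * ln(1 + c * exp(-\<alpha> * y\<^sup>2/s))"
      unfolding q_def wp using p by (simp add: w_def field_simps)
    ultimately show ?thesis by simp
  qed
  have Qi: "isCont Q 1"
  proof -
    have "continuous_on {0<..<2} Q" by (rule continuous_on_subset[OF Qc]) auto
    then show ?thesis by (subst (asm) continuous_on_eq_continuous_at) auto
  qed
  have Q0: "(Q \<longlongrightarrow> 0) (at_right 0)"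
  proof -
    have "(Q \<longlongrightarrow> Q 0) (at 0 within {0..2})" using Qc by (simp add: continuous_on_def)
    then show ?thesis by (simp add: at_within_Icc_at_right Q_def)
  qed
  have wl1: "(w \<longlongrightarrow> 1) (at_right 0)"
    unfolding w_def using s by (auto intro!: tendsto_eq_intros)
  have wl0: "(w \<longlongrightarrow> 0) at_top"
    unfolding w_def using s a by real_asymp
  have wl0': "filterlim w (at_right 0) at_top"
    by (rule tendsto_imp_filterlim_at_right[OF wl0]) (simp add: w_def)
  have e0: "((\<lambda>y. exp(-y\<^sup>2/s)) \<longlongrightarrow> 0) at_top"
    using s by real_asymp
  have LA: "(F \<longlongrightarrow> c * Q 1 - 1 * ln(1 + c * 1)) (at_right 0)"
    unfolding F_def using c s
    by (intro tendsto_intros isCont_tendsto_compose[OF Qi wl1] wl1) (auto intro!: tendsto_eq_intros)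
  have LB: "(F \<longlongrightarrow> c * 0 - 0 * ln(1 + c * 0)) at_top"
    unfolding F_def using c s
    by (intro tendsto_intros filterlim_compose[OF Q0 wl0'] wl0 e0) auto
  have fc: "isCont (\<lambda>y. 2 * y/s * exp(-y\<^sup>2/s) * ln(1 + c * exp(-\<alpha> * y\<^sup>2/s))) y" for y
    using c s by (intro continuous_intros) (auto, smt (verit) exp_gt_zero mult_pos_pos)
  have fn: "0 \<le> 2 * y/s * exp(-y\<^sup>2/s) * ln(1 + c * exp(-\<alpha> * y\<^sup>2/s))" if "y > 0" for y
    using c s that by (intro mult_nonneg_nonneg ln_ge_zero) auto
  note R = FTC_0_inf[OF FD fc fn LA LB]
  show "set_integrable lborel {0..} (\<lambda>y. 2 * y/s * exp(-y\<^sup>2/s) * ln(1 + c * exp(-\<alpha> * y\<^sup>2/s)))"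
    using R(1) .
  show "(LBINT y:{0..}. 2 * y/s * exp(-y\<^sup>2/s) * ln(1 + c * exp(-\<alpha> * y\<^sup>2/s))) = ln(1+c) - c * integral {0..1} q"
    using R(2) by (simp add: Q_def)
qed



lemma J_value:
  fixes \<sigma>2 a1 a2 x2 x s t c \<alpha> :: real
  assumes sg: "\<sigma>2 > 0" and x2: "x2 > 0" and a1: "a1 > 0" and a2: "a2 > 0"
    and s: "s = x\<^sup>2 + \<sigma>2" and t: "t = x2\<^sup>2 + \<sigma>2" and c: "c = a1 * t / (a2 * \<sigma>2)"
    and al: "\<alpha> = x2\<^sup>2 / t * (s / \<sigma>2)"
  shows "J_fun \<sigma>2 a1 a2 x2 x = - s / t + ln (a2 / t) + ln (1 + c)
           - c * integral {0..1} (\<lambda>v. v powr (1/\<alpha>) / (1 + c * v))"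
proof -
  have sp: "s > 0" using s sg by (simp add: add_nonneg_pos)
  have tp: "t > 0" using t sg by (simp add: add_nonneg_pos)
  have cp: "c > 0" using c a1 a2 tp sg by simp
  have ap: "\<alpha> > 0" using al x2 tp sp sg by simp
  define f1 where "f1 = (\<lambda>y::real. 2 * y/s * exp(-y\<^sup>2/s))"
  define f2 where "f2 = (\<lambda>y::real. 2 * y/s * exp(-y\<^sup>2/s) * y\<^sup>2)"
  define f3 where "f3 = (\<lambda>y::real. 2 * y/s * exp(-y\<^sup>2/s) * ln(1 + c * exp(-\<alpha> * y\<^sup>2/s)))"
  have I1: "set_integrable lborel {0..} f1" "(LBINT y:{0..}. f1 y) = 0 - (-1)"
  proof -
    have D: "((\<lambda>y. - exp(-y\<^sup>2/s)) has_real_derivative f1 y) (at y)" for y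
      unfolding f1_def using sp by (auto intro!: derivative_eq_intros simp: field_simps power2_eq_square)
    have A: "((\<lambda>y. - exp(-y\<^sup>2/s)) \<longlongrightarrow> -1) (at_right 0)"
      using sp by (auto intro!: tendsto_eq_intros)
    have B: "((\<lambda>y. - exp(-y\<^sup>2/s)) \<longlongrightarrow> 0) at_top"
      using sp by real_asymp
    have Cn: "isCont f1 y" for y unfolding f1_def using sp by (intro continuous_intros) auto
    have N: "0 \<le> f1 y" if "y > 0" for y unfolding f1_def using sp that by auto
    note R = FTC_0_inf[OF D Cn N A B]
    show "set_integrable lborel {0..} f1" "(LBINT y:{0..}. f1 y) = 0 - (-1)" using R by auto
  qed
  have I2: "set_integrable lborel {0..} f2" "(LBINT y:{0..}. f2 y) = 0 - (-s)"
  proof -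
    have D: "((\<lambda>y. - ((y\<^sup>2 + s) * exp(-y\<^sup>2/s))) has_real_derivative f2 y) (at y)" for y
      unfolding f2_def using sp by (auto intro!: derivative_eq_intros simp: field_simps power2_eq_square)
    have A: "((\<lambda>y. - ((y\<^sup>2 + s) * exp(-y\<^sup>2/s))) \<longlongrightarrow> -s) (at_right 0)"
      using sp by (auto intro!: tendsto_eq_intros)
    have B: "((\<lambda>y. - ((y\<^sup>2 + s) * exp(-y\<^sup>2/s))) \<longlongrightarrow> 0) at_top"
      using sp by real_asymp
    have Cn: "isCont f2 y" for y unfolding f2_def using sp by (intro continuous_intros) auto
    have N: "0 \<le> f2 y" if "y > 0" for y unfolding f2_def using sp that by auto
    note R = FTC_0_inf[OF D Cn N A B]
    show "set_integrable lborel {0..} f2" "(LBINT y:{0..}. f2 y) = 0 - (-s)" using R by auto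
  qed
  note I3 = R3[OF sp cp ap, folded f3_def]
  have pw: "2 * y / (x\<^sup>2 + \<sigma>2) * exp (- y\<^sup>2 / (x\<^sup>2 + \<sigma>2)) *
        ln (a1 / \<sigma>2 * exp (- y\<^sup>2 / \<sigma>2) + a2 / (x2\<^sup>2 + \<sigma>2) * exp (- y\<^sup>2 / (x2\<^sup>2 + \<sigma>2)))
      = ln (a2 / t) * f1 y - f2 y / t + f3 y" for y
  proof -
    have ex: "exp (- y\<^sup>2 / \<sigma>2) = exp (- y\<^sup>2 / t) * exp(-\<alpha> * y\<^sup>2/s)"
    proof -
      have e1: "\<alpha> * y\<^sup>2/s = x2\<^sup>2 * y\<^sup>2 / (t * \<sigma>2)" unfolding al using sp by (simp add: field_simps)
      have e2: "y\<^sup>2/t + x2\<^sup>2 * y\<^sup>2 / (t * \<sigma>2) = y\<^sup>2 * (\<sigma>2 + x2\<^sup>2) / (t * \<sigma>2)"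
        using sg tp by (simp add: field_simps)
      have e3: "y\<^sup>2 * (\<sigma>2 + x2\<^sup>2) / (t * \<sigma>2) = y\<^sup>2 / \<sigma>2"
        using sg tp t by (simp add: add.commute)
      have "- y\<^sup>2 / \<sigma>2 = - y\<^sup>2 / t + -\<alpha> * y\<^sup>2/s"
        using e1 e2 e3 by (simp add: algebra_simps)
      then show ?thesis by (simp add: exp_add[symmetric])
    qed
    have E: "a1 / \<sigma>2 * exp (- y\<^sup>2 / \<sigma>2) + a2 / t * exp (- y\<^sup>2 / t)
        = a2 / t * exp (- y\<^sup>2 / t) * (1 + c * exp(-\<alpha> * y\<^sup>2/s))"
      unfolding ex c using sg tp a2 by (simp add: field_simps)
    have L: "ln (a1 / \<sigma>2 * exp (- y\<^sup>2 / \<sigma>2) + a2 / t * exp (- y\<^sup>2 / t))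
        = ln (a2 / t) - y\<^sup>2 / t + ln (1 + c * exp(-\<alpha> * y\<^sup>2/s))"
    proof -
      have p1: "a2 / t > 0" using a2 tp by simp
      have p2: "1 + c * exp(-\<alpha> * y\<^sup>2/s) > 0" using cp by (simp add: add_pos_pos)
      have "ln (a2 / t * exp (- y\<^sup>2 / t) * (1 + c * exp(-\<alpha> * y\<^sup>2/s)))
          = ln (a2 / t * exp (- y\<^sup>2 / t)) + ln (1 + c * exp(-\<alpha> * y\<^sup>2/s))"
        by (rule ln_mult_pos[OF mult_pos_pos[OF p1 exp_gt_zero] p2])
      also have "ln (a2 / t * exp (- y\<^sup>2 / t)) = ln (a2 / t) + ln (exp (- y\<^sup>2 / t))"
        by (rule ln_mult_pos[OF p1 exp_gt_zero])
      finally show ?thesis unfolding E ln_exp by simp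
    qed
    show ?thesis
      unfolding f1_def f2_def f3_def s[symmetric] t[symmetric] L by (simp add: algebra_simps)
  qed
  have "J_fun \<sigma>2 a1 a2 x2 x = (LBINT y:{0..}. ln (a2 / t) * f1 y - f2 y / t + f3 y)"
    unfolding J_fun_def pw ..
  also have "\<dots> = ln (a2 / t) * (LBINT y:{0..}. f1 y) - (LBINT y:{0..}. f2 y) / t + (LBINT y:{0..}. f3 y)"
    using I1(1) I2(1) I3(1) by (simp add: set_integral_add set_integral_diff set_integrable_divide)
  also have "\<dots> = - s / t + ln (a2 / t) + ln (1 + c)
           - c * integral {0..1} (\<lambda>v. v powr (1/\<alpha>) / (1 + c * v))"
    unfolding I1(2) I2(2) I3(2) by simp
  finally show ?thesis .
qed



lemma slit_plane_open: "open slit_plane"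
proof -
  have e: "{complex_of_real t | t. t \<ge> 1} = {z. Im z = 0 \<and> Re z \<ge> 1}"
  proof (intro set_eqI iffI)
    fix z assume "z \<in> {z. Im z = 0 \<and> Re z \<ge> 1}"
    then show "z \<in> {complex_of_real t | t. t \<ge> 1}"
      by (auto intro!: exI[of _ "Re z"] complex_eqI)
  qed auto
  have "closed {z. Im z = 0 \<and> Re z \<ge> 1}"
    by (intro closed_Collect_conj closed_Collect_eq closed_Collect_le continuous_intros)
  then show ?thesis unfolding slit_plane_def e by (simp add: open_Compl)
qed

lemma slit_plane_iff: "z \<in> slit_plane \<longleftrightarrow> \<not> (Im z = 0 \<and> Re z \<ge> 1)"
proof -
  have "z \<in> {complex_of_real t | t. t \<ge> 1} \<longleftrightarrow> Im z = 0 \<and> Re z \<ge> 1"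
    by (auto intro!: exI[of _ "Re z"] complex_eqI)
  then show ?thesis unfolding slit_plane_def by blast
qed

lemma slit_plane_connected: "connected slit_plane"
proof (rule starlike_imp_connected)
  show "starlike slit_plane"
    unfolding starlike_def
  proof (intro bexI[of _ 0] ballI subsetI)
    show "0 \<in> slit_plane" by (simp add: slit_plane_iff)
    fix z w assume z: "z \<in> slit_plane" and w: "w \<in> closed_segment 0 z"
    then obtain u where u: "0 \<le> u" "u \<le> 1" "w = u *\<^sub>R z"
      by (auto simp: closed_segment_def)
    show "w \<in> slit_plane"
    proof (rule ccontr)
      assume "w \<notin> slit_plane"
      then have "Im w = 0" "Re w \<ge> 1" by (auto simp: slit_plane_iff)
      then have "u * Im z = 0" "u * Re z \<ge> 1" using u by auto
      moreover from this have "u > 0" using u by (cases "u = 0") auto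
      ultimately have "Im z = 0" "Re z \<ge> 1"
        using u by (auto, smt (verit) mult_le_cancel_left1 mult_nonneg_nonpos)
      then show False using z by (simp add: slit_plane_iff)
    qed
  qed
qed

lemma slit_plane_nz:
  assumes "z \<in> slit_plane" "0 \<le> v" "v \<le> 1"
  shows "1 - z * complex_of_real v \<noteq> 0"
proof
  assume h: "1 - z * complex_of_real v = 0"
  then have "v \<noteq> 0" by auto
  have zv: "z * complex_of_real v = 1" using h by simp
  have "Im z * v = 0" "Re z * v = 1"
    using arg_cong[OF zv, of Im] arg_cong[OF zv, of Re] by simp_all
  then have "Im z = 0" "Re z = 1 / v" using \<open>v \<noteq> 0\<close> by (auto simp: field_simps)
  moreover have "1 / v \<ge> 1" using assms(2,3) \<open>v \<noteq> 0\<close> by (simp add: field_simps)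
  ultimately show False using assms(1) by (simp add: slit_plane_iff)
qed

lemma ball_sub_slit: "ball 0 1 \<subseteq> slit_plane"
  by (auto simp: slit_plane_iff dist_norm) (smt (verit) abs_Re_le_cmod)



lemma fC_holo:
  fixes p :: real assumes p: "p > 0"
  shows "(\<lambda>z. integral {0..1} (\<lambda>v. complex_of_real (v powr p) / (1 - z * complex_of_real v))) holomorphic_on slit_plane"
  unfolding holomorphic_on_def
proof
  fix z0 assume z0: "z0 \<in> slit_plane"
  obtain r where r: "r > 0" "ball z0 r \<subseteq> slit_plane"
    using slit_plane_open z0 openE by blast
  have pc: "continuous_on S (\<lambda>u. snd u powr p)" if "\<And>u. u \<in> S \<Longrightarrow> snd u \<ge> 0" for S :: "(complex \<times> real) set"
    by (rule continuous_on_powr'[OF continuous_on_snd[OF continuous_on_id] continuous_on_const]) (use that p in auto)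
  have pc1: "continuous_on {0..1} (\<lambda>v::real. v powr p)"
    by (rule continuous_on_powr'[OF continuous_on_id continuous_on_const]) (use p in auto)
  have "(\<lambda>z. integral (cbox 0 1) (\<lambda>v. complex_of_real (v powr p) / (1 - z * complex_of_real v))) holomorphic_on ball z0 r"
  proof (rule leibniz_rule_holomorphic[where fx = "\<lambda>z v. complex_of_real (v powr p) * complex_of_real v / (1 - z * complex_of_real v)\<^sup>2"])
    fix z and v :: real assume z: "z \<in> ball z0 r" and v: "v \<in> cbox 0 1"
    have nz: "1 - z * complex_of_real v \<noteq> 0" using slit_plane_nz[of z v] z v r by auto
    show "((\<lambda>z. complex_of_real (v powr p) / (1 - z * complex_of_real v)) has_field_derivative
         complex_of_real (v powr p) * complex_of_real v / (1 - z * complex_of_real v)\<^sup>2) (at z within ball z0 r)"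
      using nz by (auto intro!: derivative_eq_intros simp: power2_eq_square field_simps)
  next
    fix z assume z: "z \<in> ball z0 r"
    have "continuous_on {0..1} (\<lambda>v. complex_of_real (v powr p) / (1 - z * complex_of_real v))"
      using slit_plane_nz[of z] z r
      by (intro continuous_intros continuous_on_of_real_o_iff pc1 continuous_on_compose2[OF continuous_on_of_real pc1]) auto
    then show "(\<lambda>v. complex_of_real (v powr p) / (1 - z * complex_of_real v)) integrable_on cbox 0 1"
      by (simp add: integrable_continuous_interval)
  next
    have e: "(\<lambda>(x, t). complex_of_real (t powr p) * complex_of_real t / (1 - x * complex_of_real t)\<^sup>2)
       = (\<lambda>u. complex_of_real (snd u powr p) * complex_of_real (snd u) / (1 - fst u * complex_of_real (snd u))\<^sup>2)"
      by (auto simp: fun_eq_iff)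
    show "continuous_on (ball z0 r \<times> cbox 0 1)
       (\<lambda>(x, t). complex_of_real (t powr p) * complex_of_real t / (1 - x * complex_of_real t)\<^sup>2)"
      unfolding e using slit_plane_nz r
      by (intro continuous_intros continuous_on_compose2[OF continuous_on_of_real pc]) (auto simp: mem_Times_iff)
  qed auto
  then have "(\<lambda>z. integral {0..1} (\<lambda>v. complex_of_real (v powr p) / (1 - z * complex_of_real v))) field_differentiable at z0"
    using holomorphic_on_imp_differentiable_at[OF _ open_ball centre_in_ball[THEN iffD2, OF r(1)]] by simp
  then show "(\<lambda>z. integral {0..1} (\<lambda>v. complex_of_real (v powr p) / (1 - z * complex_of_real v))) field_differentiable at z0 within slit_plane"
    by (rule field_differentiable_at_within)
qed



lemma moment_real:
  fixes p :: real assumes p: "p > 0"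
  shows "((\<lambda>v. v powr p * v ^ k) has_integral 1 / (p + real k + 1)) {0..1}"
proof -
  define r where "r = p + real k + 1"
  have r: "r > 0" using p by (simp add: r_def)
  have c: "continuous_on {0..1} (\<lambda>v::real. v powr r / r)"
    by (intro continuous_on_divide continuous_on_const continuous_on_powr'[OF continuous_on_id continuous_on_const])
       (use r in auto)
  have d: "((\<lambda>v. v powr r / r) has_vector_derivative v powr p * v ^ k) (at v)" if "v \<in> {0<..<1}" for v
  proof -
    have v: "v > 0" using that by simp
    have "((\<lambda>v. v powr r / r) has_real_derivative r * v powr (r - 1) / r) (at v)"
      by (intro DERIV_cdivide has_real_derivative_powr v)
    moreover have "r * v powr (r - 1) / r = v powr p * v ^ k"
      using r v by (simp add: r_def powr_add powr_realpow)
    ultimately show ?thesis by (simp add: has_real_derivative_iff_has_vector_derivative)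
  qed
  have "((\<lambda>v. v powr p * v ^ k) has_integral (1 powr r / r - 0 powr r / r)) {0..1}"
    by (rule fundamental_theorem_of_calculus_interior[OF _ c d]) auto
  then show ?thesis using r by (simp add: r_def)
qed

lemma moment_cx:
  fixes p :: real and u :: complex assumes p: "p > 0"
  shows "((\<lambda>v. complex_of_real (v powr p) * (u * complex_of_real v) ^ k) has_integral
           u ^ k * complex_of_real (1 / (p + real k + 1))) {0..1}"
proof -
  have "((\<lambda>v. u ^ k * complex_of_real (v powr p * v ^ k)) has_integral
           u ^ k * complex_of_real (1 / (p + real k + 1))) {0..1}"
    by (intro has_integral_mult_right has_integral_of_real moment_real p)
  then show ?thesis
    by (rule has_integral_eq[rotated]) (simp add: power_mult_distrib)
qed

lemma poch_ratio:
  fixes p :: real assumes p: "p > 0"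
  shows "pochhammer (complex_of_real (1+p)) k / pochhammer (complex_of_real (1+p) + 1) k
         = complex_of_real (1+p) * complex_of_real (1 / (p + real k + 1))"
proof -
  define B where "B = complex_of_real (1+p)"
  have nz: "pochhammer (B + 1) k \<noteq> 0"
  proof
    assume "pochhammer (B + 1) k = 0"
    then obtain j where "B + 1 = - of_nat j" by (auto simp: pochhammer_eq_0_iff)
    then have "Re (B + 1) = - real j" by (metis Re_complex_of_real of_real_of_nat_eq uminus_complex.sel(1))
    then show False using p by (simp add: B_def)
  qed
  have Bk: "B + of_nat k = complex_of_real (p + real k + 1)" by (simp add: B_def)
  have "p + real k + 1 \<noteq> 0" using p by linarith
  then have Bknz: "B + of_nat k \<noteq> 0" unfolding Bk by (simp only: of_real_eq_0_iff, simp)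
  have "B * pochhammer (B + 1) k = (B + of_nat k) * pochhammer B k"
    using pochhammer_rec[of B k] pochhammer_rec'[of B k] by simp
  then have "pochhammer B k / pochhammer (B + 1) k = B / (B + of_nat k)"
    using nz Bknz by (simp add: field_simps)
  also have "\<dots> = B * complex_of_real (1 / (p + real k + 1))"
    unfolding Bk by (simp add: divide_inverse)
  finally show ?thesis by (simp add: B_def)
qed

lemma series_eq:
  fixes p :: real and u :: complex
  assumes p: "p > 0" and u: "norm u < 1"
  shows "hyp2F1_series 1 (complex_of_real (1+p)) (complex_of_real (1+p) + 1) u
       = complex_of_real (1+p) * integral {0..1} (\<lambda>v. complex_of_real (v powr p) / (1 - u * complex_of_real v))"
proof -
  define B where "B = complex_of_real (1+p)"
  define G where "G = (\<lambda>v. complex_of_real (v powr p) / (1 - u * complex_of_real v))"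
  define m where "m = (\<lambda>k::nat. u ^ k * complex_of_real (1 / (p + real k + 1)))"
  have unz: "1 - u * complex_of_real v \<noteq> 0" if "v \<in> {0..1}" for v
  proof
    assume "1 - u * complex_of_real v = 0"
    then have "norm (u * complex_of_real v) = 1" by (metis eq_iff_diff_eq_0 norm_one)
    moreover have "norm (u * complex_of_real v) \<le> norm u"
      using that by (simp add: norm_mult mult_left_le)
    ultimately show False using u by simp
  qed
  have pc1: "continuous_on {0..1} (\<lambda>v::real. v powr p)"
    by (rule continuous_on_powr'[OF continuous_on_id continuous_on_const]) (use p in auto)
  have Gc: "continuous_on {0..1} G"
    unfolding G_def using unz
    by (intro continuous_intros continuous_on_compose2[OF continuous_on_of_real pc1]) auto
  have Gi: "(G has_integral integral {0..1} G) {0..1}"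
    using integrable_continuous_interval[OF Gc] by (simp add: has_integral_integral)
  have bound: "norm (integral {0..1} G - (\<Sum>k<n. m k)) \<le> norm u ^ n / (1 - norm u)" for n
  proof -
    have S: "((\<lambda>v. \<Sum>k<n. complex_of_real (v powr p) * (u * complex_of_real v) ^ k) has_integral (\<Sum>k<n. m k)) {0..1}"
      unfolding m_def by (intro has_integral_sum moment_cx p) auto
    have D: "((\<lambda>v. G v - (\<Sum>k<n. complex_of_real (v powr p) * (u * complex_of_real v) ^ k))
            has_integral (integral {0..1} G - (\<Sum>k<n. m k))) {0..1}"
      by (rule has_integral_diff[OF Gi S])
    have pt: "norm (G v - (\<Sum>k<n. complex_of_real (v powr p) * (u * complex_of_real v) ^ k)) \<le> norm u ^ n / (1 - norm u)"
      if v: "v \<in> cbox 0 1" for v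
    proof -
      have v01: "0 \<le> v" "v \<le> 1" using v by auto
      define x where "x = u * complex_of_real v"
      have x1: "x \<noteq> 1" using unz[of v] v01 by (auto simp: x_def)
      have "G v - (\<Sum>k<n. complex_of_real (v powr p) * x ^ k)
          = complex_of_real (v powr p) * (1 / (1 - x) - (\<Sum>k<n. x ^ k))"
        unfolding G_def x_def by (simp add: sum_distrib_left field_simps)
      also have "1 / (1 - x) - (\<Sum>k<n. x ^ k) = x ^ n / (1 - x)"
        using x1 by (simp add: sum_gp_strict field_simps)
      finally have eq: "G v - (\<Sum>k<n. complex_of_real (v powr p) * x ^ k) = complex_of_real (v powr p) * x ^ n / (1 - x)"
        by simp
      have nx: "norm x \<le> norm u" using v01 by (simp add: x_def norm_mult mult_left_le)
      have pv: "0 \<le> v powr p" "v powr p \<le> 1"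
        using powr_mono2[of p v 1] p v01 by auto
      have num: "norm (complex_of_real (v powr p) * x ^ n) \<le> norm u ^ n"
      proof -
        have "norm (complex_of_real (v powr p) * x ^ n) = v powr p * norm x ^ n"
          using pv by (simp add: norm_mult norm_power)
        also have "\<dots> \<le> 1 * norm u ^ n"
          by (intro mult_mono pv power_mono nx) auto
        finally show ?thesis by simp
      qed
      have den: "1 - norm u \<le> norm (1 - x)"
        using norm_triangle_ineq2[of 1 x] nx by simp
      have "norm (complex_of_real (v powr p) * x ^ n / (1 - x)) \<le> norm u ^ n / (1 - norm u)"
        unfolding norm_divide using num den u by (intro frac_le) auto
      then show ?thesis using eq by (simp add: x_def)
    qed
    show ?thesis
      using has_integral_bound[OF _ D[unfolded box_real(2)[symmetric]] pt] u by simp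
  qed
  have lim0: "(\<lambda>n. integral {0..1} G - (\<Sum>k<n. m k)) \<longlonglongrightarrow> 0"
  proof (rule Lim_null_comparison[OF always_eventually[OF allI[OF bound]]])
    show "(\<lambda>n. norm u ^ n / (1 - norm u)) \<longlonglongrightarrow> 0"
      using u by (intro tendsto_divide_zero LIMSEQ_power_zero) auto
  qed
  have "(\<lambda>n. (\<Sum>k<n. m k)) \<longlonglongrightarrow> integral {0..1} G"
    using tendsto_diff[OF tendsto_const[of "integral {0..1} G"] lim0] by simp
  then have "(\<lambda>n. (\<Sum>k<n. B * m k)) \<longlonglongrightarrow> B * integral {0..1} G"
    by (simp add: sum_distrib_left[symmetric] tendsto_mult_left)
  then have sm: "(\<lambda>k. B * m k) sums (B * integral {0..1} G)"
    by (simp add: sums_def)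
  have trm: "pochhammer 1 k * pochhammer B k / pochhammer (B + 1) k * u ^ k / of_nat (fact k) = B * m k" for k
  proof -
    have f: "pochhammer (1::complex) k = of_nat (fact k)" by (metis pochhammer_fact of_nat_fact)
    have "pochhammer 1 k * pochhammer B k / pochhammer (B + 1) k * u ^ k / of_nat (fact k)
        = pochhammer B k / pochhammer (B + 1) k * u ^ k"
      unfolding f by simp
    also have "\<dots> = B * m k" unfolding B_def poch_ratio[OF p] m_def by simp
    finally show ?thesis .
  qed
  show ?thesis
    unfolding hyp2F1_series_def B_def[symmetric] G_def[symmetric] trm
    using sums_unique[OF sm] by simp
qed



lemma hyp_eq:
  fixes p :: real assumes p: "p > 0" and z0: "z0 \<in> slit_plane"
  shows "hyp2F1 1 (complex_of_real (1+p)) (complex_of_real (1+p) + 1) z0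
       = complex_of_real (1+p) * integral {0..1} (\<lambda>v. complex_of_real (v powr p) / (1 - z0 * complex_of_real v))"
proof -
  define f where "f = (\<lambda>z. complex_of_real (1+p) * integral {0..1} (\<lambda>v. complex_of_real (v powr p) / (1 - z * complex_of_real v)))"
  have holo: "f holomorphic_on slit_plane"
    unfolding f_def by (rule holomorphic_on_mult[OF holomorphic_on_const fC_holo[OF p]])
  have agree: "\<forall>u. norm u < 1 \<longrightarrow> f u = hyp2F1_series 1 (complex_of_real (1+p)) (complex_of_real (1+p) + 1) u"
    unfolding f_def using series_eq[OF p] by simp
  define P where "P = (\<lambda>w. \<exists>g. g holomorphic_on slit_plane \<and>
          (\<forall>u. norm u < 1 \<longrightarrow> g u = hyp2F1_series 1 (complex_of_real (1+p)) (complex_of_real (1+p) + 1) u) \<and>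
          g z0 = w)"
  have hP: "hyp2F1 1 (complex_of_real (1+p)) (complex_of_real (1+p) + 1) z0 = (THE w. P w)"
    unfolding hyp2F1_def P_def ..
  have "(THE w. P w) = f z0"
  proof (rule the_equality)
    show "P (f z0)" unfolding P_def using holo agree by blast
  next
    fix w assume "P w"
    then obtain g where g: "g holomorphic_on slit_plane"
      "\<forall>u. norm u < 1 \<longrightarrow> g u = hyp2F1_series 1 (complex_of_real (1+p)) (complex_of_real (1+p) + 1) u"
      "g z0 = w" unfolding P_def by blast
    have "(\<lambda>z. g z - f z) z0 = 0"
    proof (rule analytic_continuation[of "\<lambda>z. g z - f z" slit_plane "ball 0 1" 0])
      show "(\<lambda>z. g z - f z) holomorphic_on slit_plane" by (intro holomorphic_on_diff g(1) holo)
      show "open slit_plane" by (rule slit_plane_open)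
      show "connected slit_plane" by (rule slit_plane_connected)
      show "ball 0 1 \<subseteq> slit_plane" by (rule ball_sub_slit)
      show "0 \<in> slit_plane" using ball_sub_slit by auto
      show "0 islimpt ball (0::complex) 1" by (simp add: islimpt_ball)
      show "z0 \<in> slit_plane" by (rule z0)
      fix z :: complex assume "z \<in> ball 0 1"
      then show "g z - f z = 0" using g(2) agree by (simp add: dist_norm)
    qed
    then show "w = f z0" using g(3) by simp
  qed
  then show ?thesis unfolding hP f_def .
qed

theorem mainTheorem4:
  fixes \<sigma>2 x2 x a1 a2 \<alpha> \<beta> :: real
  assumes "\<sigma>2 > 0" and "x2 > 0" and "x \<ge> 0"
    and "0 < a1" and "a1 < 1" and "0 < a2" and "a2 < 1" and "a1 + a2 = 1"
    and "\<alpha> = x2\<^sup>2 / (x2\<^sup>2 + \<sigma>2) * ((x\<^sup>2 + \<sigma>2) / \<sigma>2)"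
    and "\<beta> = a2 / a1 * (\<sigma>2 / (x2\<^sup>2 + \<sigma>2))"
  shows "complex_of_real (J_fun \<sigma>2 a1 a2 x2 x) =
           complex_of_real (- (x\<^sup>2 + \<sigma>2) / (x2\<^sup>2 + \<sigma>2) + ln (a2 / (x2\<^sup>2 + \<sigma>2))
                            + ln (1 + inverse \<beta>))
           - complex_of_real (\<alpha> * inverse \<beta> / (\<alpha> + 1))
             * hyp2F1 1 (complex_of_real ((\<alpha> + 1) / \<alpha>)) (complex_of_real ((2 * \<alpha> + 1) / \<alpha>))
                 (complex_of_real (- inverse \<beta>))"
proof -
  note sg = assms(1) and x2 = assms(2) and a1 = assms(4) and a2 = assms(6) and al = assms(9) and be = assms(10)
  define s where "s = x\<^sup>2 + \<sigma>2"
  define t where "t = x2\<^sup>2 + \<sigma>2"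
  define c where "c = a1 * t / (a2 * \<sigma>2)"
  have sp: "s > 0" using sg by (simp add: s_def add_nonneg_pos)
  have tp: "t > 0" using sg by (simp add: t_def add_nonneg_pos)
  have cp: "c > 0" using a1 a2 tp sg by (simp add: c_def)
  have ap: "\<alpha> > 0" using al x2 sg by (simp add: add_nonneg_pos)
  have ic: "inverse \<beta> = c" unfolding be c_def t_def by (simp add: field_simps)
  define p where "p = 1 / \<alpha>"
  have pp: "p > 0" using ap by (simp add: p_def)
  have J: "J_fun \<sigma>2 a1 a2 x2 x = - s / t + ln (a2 / t) + ln (1 + c)
           - c * integral {0..1} (\<lambda>v. v powr (1/\<alpha>) / (1 + c * v))"
    by (rule J_value[OF sg x2 a1 a2 s_def t_def c_def]) (simp add: al s_def t_def)
  define q where "q = (\<lambda>v::real. v powr p / (1 + c * v))"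
  have qc: "continuous_on {0..1} q"
  proof -
    have pc1: "continuous_on {0..1} (\<lambda>v::real. v powr p)"
      by (rule continuous_on_powr'[OF continuous_on_id continuous_on_const]) (use pp in auto)
    show ?thesis unfolding q_def using cp
      by (intro continuous_on_divide pc1 continuous_intros) (auto, smt (verit) mult_nonneg_nonneg)
  qed
  have qi: "(q has_integral integral {0..1} q) {0..1}"
    using integrable_continuous_interval[OF qc] by (simp add: has_integral_integral)
  have ci: "integral {0..1} (\<lambda>v. complex_of_real (v powr p) / (1 - complex_of_real (- c) * complex_of_real v))
      = complex_of_real (integral {0..1} q)"
  proof -
    have "((\<lambda>v. complex_of_real (q v)) has_integral complex_of_real (integral {0..1} q)) {0..1}"
      by (rule has_integral_of_real[OF qi])
    then have "((\<lambda>v. complex_of_real (v powr p) / (1 - complex_of_real (- c) * complex_of_real v))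
        has_integral complex_of_real (integral {0..1} q)) {0..1}"
      by (rule has_integral_eq[rotated]) (simp add: q_def)
    then show ?thesis by (rule integral_unique)
  qed
  have z0: "complex_of_real (- c) \<in> slit_plane" using cp by (simp add: slit_plane_iff)
  have H: "hyp2F1 1 (complex_of_real ((\<alpha> + 1) / \<alpha>)) (complex_of_real ((2 * \<alpha> + 1) / \<alpha>)) (complex_of_real (- inverse \<beta>))
      = complex_of_real (1+p) * complex_of_real (integral {0..1} q)"
  proof -
    have e1: "complex_of_real ((\<alpha> + 1) / \<alpha>) = complex_of_real (1+p)"
      using ap by (simp add: p_def field_simps)
    have e2: "complex_of_real ((2 * \<alpha> + 1) / \<alpha>) = complex_of_real (1+p) + 1"
      using ap by (simp add: p_def field_simps)
    show ?thesis unfolding e1 e2 ic hyp_eq[OF pp z0] ci ..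
  qed
  have fin: "\<alpha> * c / (\<alpha> + 1) * (1 + p) = c"
  proof -
    have n1: "\<alpha> + 1 \<noteq> 0" "\<alpha> \<noteq> 0" using ap by auto
    have "\<alpha> * c / (\<alpha> + 1) * (1 + p) = \<alpha> * c / (\<alpha> + 1) * ((\<alpha> + 1) / \<alpha>)"
      using n1 by (simp add: p_def add_divide_distrib)
    also have "\<dots> = c" using n1 by simp
    finally show ?thesis .
  qed
  have K: "complex_of_real (\<alpha> * inverse \<beta> / (\<alpha> + 1)) * (complex_of_real (1+p) * complex_of_real (integral {0..1} q))
      = complex_of_real (c * integral {0..1} q)"
    unfolding ic by (metis fin of_real_mult mult.assoc)
  show ?thesis
    unfolding H K unfolding J ic
    by (simp add: s_def t_def q_def p_def)
qed


end
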